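(* Let $N$ be odd. Define $V:\mathbb{R}\to\mathbb{R}$ by $V(\theta)=\frac{2}{\pi}|\theta-\frac{\pi}{2}|$ for $\theta\in[0,\pi]$, extended to be $\pi$-periodic on $\mathbb{R}$, and define $F_V(\theta_1,\dots,\theta_N)=\sum_{k=1}^N\sum_{\ell\neq k}V(\theta_k-\theta_\ell)$ for $(\theta_1,\dots,\theta_N)\in\mathbb{R}^N$. Then the configuration $\Theta_N^\perp=(0,\dots,0,\frac{\pi}{2},\dots,\frac{\pi}{2})$, with $(N+1)/2$ entries equal to $0$ and $(N-1)/2$ entries equal to $\frac{\pi}{2}$, is a global minimizer of $F_V$, and the global minimum value is $F_V(\Theta_N^\perp)=(N-1)^2/2$. *)

theory Defs
  imports Complex_Main
begin

definition V :: "real \<Rightarrow> real" where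
  "V t = (let s = t - pi * of_int \<lfloor>t / pi\<rfloor> in (2 / pi) * \<bar>s - pi / 2\<bar>)"

text \<open>Configurations in R^N are represented as functions nat => real; only the
  entries with index < N (0-based) are used.\<close>
definition F_V :: "nat \<Rightarrow> (nat \<Rightarrow> real) \<Rightarrow> real" where
  "F_V N \<theta> = (\<Sum>k<N. \<Sum>l\<in>{..<N} - {k}. V (\<theta> k - \<theta> l))"

definition Theta_perp :: "nat \<Rightarrow> nat \<Rightarrow> real" where
  "Theta_perp N k = (if k < (N + 1) div 2 then 0 else pi / 2)"

end

theory Submission
  imports Defs
begin

lemma V_periodic: "V (x + of_int k * pi) = V x"
proof -
  have "(x + of_int k * pi) / pi = x / pi + of_int k" by (simp add: field_simps)
  hence "\<lfloor>(x + of_int k * pi) / pi\<rfloor> = \<lfloor>x / pi\<rfloor> + k" by simp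
  thus ?thesis unfolding V_def Let_def by (simp add: algebra_simps)
qed

lemma V_small: assumes "\<bar>x\<bar> < pi" shows "V x = \<bar>1 - 2 * \<bar>x\<bar> / pi\<bar>"
proof (cases "x \<ge> 0")
  case True
  have "\<lfloor>x / pi\<rfloor> = 0" using True assms by (simp add: floor_eq_iff)
  hence "V x = (2/pi) * \<bar>x - pi/2\<bar>" unfolding V_def Let_def by simp
  also have "\<dots> = \<bar>(2/pi) * (x - pi/2)\<bar>" by (subst abs_mult) simp
  also have "(2/pi) * (x - pi/2) = -(1 - 2*\<bar>x\<bar>/pi)" using True by (simp add: field_simps)
  hence "\<bar>(2/pi) * (x - pi/2)\<bar> = \<bar>1 - 2 * \<bar>x\<bar> / pi\<bar>" by (simp only: abs_minus_cancel)
  finally show ?thesis .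
next
  case False
  have "\<lfloor>x / pi\<rfloor> = -1" using False assms by (simp add: floor_eq_iff field_simps)
  hence "V x = (2/pi) * \<bar>x + pi - pi/2\<bar>" unfolding V_def Let_def by simp
  also have "\<dots> = \<bar>(2/pi) * (x + pi/2)\<bar>" by (subst abs_mult) simp
  also have "(2/pi) * (x + pi/2) = (1 - 2*\<bar>x\<bar>/pi)" using False by (simp add: field_simps)
  finally show ?thesis .
qed

definition sh :: "nat \<Rightarrow> nat \<Rightarrow> nat \<Rightarrow> nat" where
  "sh N a b = (if a + b < N then a + b else a + b - N)"

lemma sh_bij: assumes "i < N" shows "bij_betw (sh N i) {..<N} {..<N}"
proof -
  have sub: "sh N i ` {..<N} \<subseteq> {..<N}" using assms by (auto simp: sh_def)
  have inj: "inj_on (sh N i) {..<N}"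
    unfolding inj_on_def sh_def using assms by auto
  show ?thesis unfolding bij_betw_def using endo_inj_surj[OF _ sub inj] inj by simp
qed

lemma sh_sum: fixes t :: "nat \<Rightarrow> real" assumes "r < N"
  shows "(\<Sum>i<N. t (sh N i r)) = (\<Sum>i<N. t i)"
proof -
  have "sh N i r = sh N r i" for i by (simp add: sh_def add.commute)
  hence "(\<Sum>i<N. t (sh N i r)) = (\<Sum>i<N. t (sh N r i))" by simp
  also have "\<dots> = (\<Sum>i<N. t i)" using sum.reindex_bij_betw[OF sh_bij[OF assms], of t] by simp
  finally show ?thesis .
qed

lemma sum_min: "(\<Sum>r<2*m+1. min r (2*m+1-r)) = m*(m+1::nat)"
proof (induction m)
  case 0 then show ?case by simp
next
  case (Suc m)
  have "(\<Sum>r<2*Suc m+1. min r (2*Suc m+1-r)) = (\<Sum>r<2*m+2. min (Suc r) (2*m+2-r))"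
  proof -
    have e: "2*Suc m+1 = Suc (2*m+2)" by simp
    show ?thesis unfolding e sum.lessThan_Suc_shift by simp
  qed
  also have "\<dots> = (\<Sum>r<2*m+2. min r (2*m+1-r) + 1)"
    by (rule sum.cong) auto
  also have "\<dots> = (\<Sum>r<2*m+2. min r (2*m+1-r)) + (2*m+2)"
    by (simp only: sum.distrib) simp
  also have "\<dots> = (\<Sum>r<2*m+1. min r (2*m+1-r)) + (2*m+2)"
    by (simp add: numeral_eq_Suc)
  finally show ?case using Suc by simp
qed

lemma card_wrap: fixes r N :: nat assumes "r < N"
  shows "(\<Sum>i<N. (if i + r < N then 0 else pi)) = pi * real r"
    and "(\<Sum>i<N. (if i + r < N then pi else 0)) = pi * real (N - r)"
proof -
  have U: "{..<N} = {..<N-r} \<union> {N-r..<N}" by (auto intro: less_le_trans[OF _ diff_le_self])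
  have D: "{..<N-r} \<inter> {N-r..<N} = {}" by auto
  have "(\<Sum>i<N. (if i + r < N then 0 else pi)) = (\<Sum>i<N-r. (if i + r < N then 0 else pi)) + (\<Sum>i\<in>{N-r..<N}. (if i + r < N then 0 else pi))"
    by (subst U, rule sum.union_disjoint) (use D in auto)
  also have "\<dots> = (\<Sum>i<N-r. 0) + (\<Sum>i\<in>{N-r..<N}. pi)"
    by (intro arg_cong2[where f="(+)"] sum.cong) auto
  finally show "(\<Sum>i<N. (if i + r < N then 0 else pi)) = pi * real r" using assms by simp
  have "(\<Sum>i<N. (if i + r < N then pi else 0)) = (\<Sum>i<N-r. (if i + r < N then pi else 0)) + (\<Sum>i\<in>{N-r..<N}. (if i + r < N then pi else 0))"
    by (subst U, rule sum.union_disjoint) (use D in auto)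
  also have "\<dots> = (\<Sum>i<N-r. pi) + (\<Sum>i\<in>{N-r..<N}. 0)"
    by (intro arg_cong2[where f="(+)"] sum.cong) auto
  finally show "(\<Sum>i<N. (if i + r < N then pi else 0)) = pi * real (N - r)" using assms by simp
qed

lemma pointwise:
  fixes t :: "nat \<Rightarrow> real" and N r i :: nat
  assumes mono: "\<And>i j. i \<le> j \<Longrightarrow> j < N \<Longrightarrow> t i \<le> t j"
    and rng: "\<And>i. i < N \<Longrightarrow> 0 \<le> t i \<and> t i < pi" and r: "r < N" and i: "i < N"
  shows "V (t i - t (sh N i r)) \<ge> 1 - (2/pi) * (t (sh N i r) - t i + (if i + r < N then 0 else pi))"
    and "V (t i - t (sh N i r)) \<ge> 1 - (2/pi) * (t i - t (sh N i r) + (if i + r < N then pi else 0))"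
proof -
  let ?j = "sh N i r"
  have j: "?j < N" using i r by (auto simp: sh_def)
  have a: "\<bar>t i - t ?j\<bar> < pi" using rng[OF i] rng[OF j] by auto
  have Veq: "V (t i - t ?j) = \<bar>1 - 2 * \<bar>t i - t ?j\<bar> / pi\<bar>" using V_small[OF a] .
  have p: "pi > 0" by simp
  show "V (t i - t ?j) \<ge> 1 - (2/pi) * (t ?j - t i + (if i + r < N then 0 else pi))"
  proof (cases "i + r < N")
    case True
    hence "t i \<le> t ?j" using mono j by (auto simp: sh_def)
    thus ?thesis using True Veq p by (simp add: field_simps)
  next
    case False
    hence "t ?j \<le> t i" using mono i r by (auto simp: sh_def)
    thus ?thesis using False Veq p by (simp add: field_simps)
  qed
  show "V (t i - t ?j) \<ge> 1 - (2/pi) * (t i - t ?j + (if i + r < N then pi else 0))"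
  proof (cases "i + r < N")
    case True
    hence "t i \<le> t ?j" using mono j by (auto simp: sh_def)
    thus ?thesis using True Veq p by (simp add: field_simps)
  next
    case False
    hence "t ?j \<le> t i" using mono i r by (auto simp: sh_def)
    thus ?thesis using False Veq p by (simp add: field_simps)
  qed
qed

lemma lin_sum: fixes a b w :: "nat \<Rightarrow> real"
  shows "(\<Sum>i<N. 1 - c * (a i - b i + w i)) = real N - c * ((\<Sum>i<N. a i) - (\<Sum>i<N. b i) + (\<Sum>i<N. w i))"
  by (simp add: sum_subtractf sum.distrib sum_distrib_left right_diff_distrib distrib_left)

lemma rsum_bound:
  fixes t :: "nat \<Rightarrow> real" and N r :: nat
  assumes mono: "\<And>i j. i \<le> j \<Longrightarrow> j < N \<Longrightarrow> t i \<le> t j"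
    and rng: "\<And>i. i < N \<Longrightarrow> 0 \<le> t i \<and> t i < pi" and r: "r < N"
  shows "(\<Sum>i<N. V (t i - t (sh N i r))) \<ge> real N - 2 * real (min r (N - r))"
proof -
  have p: "pi > 0" by simp
  have b1: "(\<Sum>i<N. V (t i - t (sh N i r))) \<ge> real N - 2 * real r"
  proof -
    have "(\<Sum>i<N. V (t i - t (sh N i r))) \<ge> (\<Sum>i<N. 1 - (2/pi) * (t (sh N i r) - t i + (if i + r < N then 0 else pi)))"
      by (rule sum_mono) (rule pointwise(1)[OF mono rng r], auto)
    also have "(\<Sum>i<N. 1 - (2/pi) * (t (sh N i r) - t i + (if i + r < N then 0 else pi)))
       = real N - (2/pi) * ((\<Sum>i<N. t (sh N i r)) - (\<Sum>i<N. t i) + (\<Sum>i<N. (if i + r < N then 0 else pi)))"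
      by (rule lin_sum)
    also have "\<dots> = real N - 2 * real r" using p by (simp add: sh_sum[OF r] card_wrap[OF r])
    finally show ?thesis .
  qed
  show ?thesis
  proof (cases "r = 0")
    case True thus ?thesis using b1 by simp
  next
    case False
    have "(\<Sum>i<N. V (t i - t (sh N i r))) \<ge> (\<Sum>i<N. 1 - (2/pi) * (t i - t (sh N i r) + (if i + r < N then pi else 0)))"
      by (rule sum_mono) (rule pointwise(2)[OF mono rng r], auto)
    also have "(\<Sum>i<N. 1 - (2/pi) * (t i - t (sh N i r) + (if i + r < N then pi else 0)))
       = real N - (2/pi) * ((\<Sum>i<N. t i) - (\<Sum>i<N. t (sh N i r)) + (\<Sum>i<N. (if i + r < N then pi else 0)))"
      by (rule lin_sum)
    also have "\<dots> = real N - 2 * real (N - r)" using p by (simp add: sh_sum[OF r] card_wrap[OF r])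
    finally have "(\<Sum>i<N. V (t i - t (sh N i r))) \<ge> real N - 2 * real (N - r)" .
    thus ?thesis using b1 by (simp add: min_def)
  qed
qed


lemma sorted_total:
  fixes t :: "nat \<Rightarrow> real" and N :: nat
  assumes mono: "\<And>i j. i \<le> j \<Longrightarrow> j < N \<Longrightarrow> t i \<le> t j"
    and rng: "\<And>i. i < N \<Longrightarrow> 0 \<le> t i \<and> t i < pi" and N: "N = 2*m+1"
  shows "(\<Sum>i<N. \<Sum>j<N. V (t i - t j)) \<ge> real N * real N - 2 * real (m*(m+1))"
proof -
  have "(\<Sum>i<N. \<Sum>j<N. V (t i - t j)) = (\<Sum>i<N. \<Sum>r<N. V (t i - t (sh N i r)))"
  proof (rule sum.cong[OF refl])
    fix i assume "i \<in> {..<N}"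
    hence i: "i < N" by simp
    show "(\<Sum>j<N. V (t i - t j)) = (\<Sum>r<N. V (t i - t (sh N i r)))"
      using sum.reindex_bij_betw[OF sh_bij[OF i], of "\<lambda>j. V (t i - t j)"] by simp
  qed
  also have "\<dots> = (\<Sum>r<N. \<Sum>i<N. V (t i - t (sh N i r)))" by (rule sum.swap)
  also have "\<dots> \<ge> (\<Sum>r<N. real N - 2 * real (min r (N - r)))"
    by (rule sum_mono) (rule rsum_bound[OF mono rng], auto)
  also have "(\<Sum>r<N. real N - 2 * real (min r (N - r))) = real N * real N - 2 * real (\<Sum>r<N. min r (N - r))"
    by (simp add: sum_subtractf sum_distrib_left)
  also have "(\<Sum>r<N. min r (N - r)) = m*(m+1)" using sum_min[of m] N by simp
  finally show ?thesis by simp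
qed

lemma split_sum: fixes f :: "nat \<Rightarrow> real" assumes "a \<le> N"
  shows "(\<Sum>i<N. f i) = (\<Sum>i<a. f i) + (\<Sum>i\<in>{a..<N}. f i)"
proof -
  have U: "{..<N} = {..<a} \<union> {a..<N}" using assms by auto
  have D: "{..<a} \<inter> {a..<N} = {}" by auto
  show ?thesis by (subst U, rule sum.union_disjoint) (use D in auto)
qed

lemma F_alt: "F_V N \<theta> = (\<Sum>k<N. \<Sum>l<N. V (\<theta> k - \<theta> l)) - real N"
proof -
  have V0: "V 0 = 1" using V_small[of 0] by simp
  have "(\<Sum>l<N. V (\<theta> k - \<theta> l)) = 1 + (\<Sum>l\<in>{..<N} - {k}. V (\<theta> k - \<theta> l))" if "k < N" for k
    using sum.remove[of "{..<N}" k "\<lambda>l. V (\<theta> k - \<theta> l)"] that V0 by simp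
  hence "(\<Sum>k<N. \<Sum>l<N. V (\<theta> k - \<theta> l)) = (\<Sum>k<N. 1 + (\<Sum>l\<in>{..<N} - {k}. V (\<theta> k - \<theta> l)))"
    by (intro sum.cong) auto
  thus ?thesis unfolding F_V_def by (simp add: sum.distrib)
qed


lemma general_bound:
  fixes \<theta> :: "nat \<Rightarrow> real" and N :: nat
  assumes N: "N = 2*m+1"
  shows "(\<Sum>k<N. \<Sum>l<N. V (\<theta> k - \<theta> l)) \<ge> real N * real N - 2 * real (m*(m+1))"
proof -
  define s where "s k = \<theta> k - pi * of_int \<lfloor>\<theta> k / pi\<rfloor>" for k
  have p: "pi > 0" by simp
  have srng: "0 \<le> s k \<and> s k < pi" for k
  proof -
    have "of_int \<lfloor>\<theta> k / pi\<rfloor> \<le> \<theta> k / pi" by (rule of_int_floor_le)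
    hence a: "pi * of_int \<lfloor>\<theta> k / pi\<rfloor> \<le> \<theta> k" proof -
      have "pi * of_int \<lfloor>\<theta> k / pi\<rfloor> \<le> pi * (\<theta> k / pi)" using mult_left_mono[OF \<open>of_int \<lfloor>\<theta> k / pi\<rfloor> \<le> \<theta> k / pi\<close>, of pi] p by simp
      thus ?thesis using p by simp
    qed
    have "\<theta> k / pi < of_int \<lfloor>\<theta> k / pi\<rfloor> + 1" by (rule real_of_int_floor_add_one_gt)
    hence b: "\<theta> k < pi * of_int \<lfloor>\<theta> k / pi\<rfloor> + pi" using p by (simp add: field_simps)
    show ?thesis using a b unfolding s_def by simp
  qed
  have Vs: "V (\<theta> k - \<theta> l) = V (s k - s l)" for k l
  proof -
    have "\<theta> k - \<theta> l = (s k - s l) + of_int (\<lfloor>\<theta> k / pi\<rfloor> - \<lfloor>\<theta> l / pi\<rfloor>) * pi"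
      unfolding s_def by (simp add: algebra_simps)
    thus ?thesis by (metis V_periodic)
  qed
  define xs where "xs = sort_key s [0..<N]"
  have len: "length xs = N" and dis: "distinct xs" and st: "set xs = {..<N}"
    unfolding xs_def by auto
  have bij: "bij_betw ((!) xs) {..<N} {..<N}" by (rule bij_betw_nth) (use len dis st in auto)
  have srt: "sorted (map s xs)" unfolding xs_def by simp
  define t where "t i = s (xs ! i)" for i
  have mono: "t i \<le> t j" if "i \<le> j" "j < N" for i j
    using sorted_nth_mono[OF srt that(1)] that len unfolding t_def by simp
  have trng: "0 \<le> t i \<and> t i < pi" if "i < N" for i unfolding t_def using srng by blast
  have "(\<Sum>k<N. \<Sum>l<N. V (\<theta> k - \<theta> l)) = (\<Sum>k<N. \<Sum>l<N. V (s k - s l))" by (simp add: Vs)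
  also have "\<dots> = (\<Sum>i<N. \<Sum>l<N. V (s (xs ! i) - s l))"
    using sum.reindex_bij_betw[OF bij, of "\<lambda>k. \<Sum>l<N. V (s k - s l)"] by simp
  also have "\<dots> = (\<Sum>i<N. \<Sum>j<N. V (t i - t j))"
    unfolding t_def
  proof (rule sum.cong[OF refl])
    fix i
    show "(\<Sum>l<N. V (s (xs ! i) - s l)) = (\<Sum>j<N. V (s (xs ! i) - s (xs ! j)))"
      using sum.reindex_bij_betw[OF bij, of "\<lambda>l. V (s (xs ! i) - s l)"] by simp
  qed
  finally show ?thesis using sorted_total[OF mono trng N] by simp
qed


lemma V_vals: "V 0 = 1" "V (pi/2) = 0" "V (-(pi/2)) = 0" "V (0 - pi/2) = 0" "V (pi/2 - 0) = 0"
  using V_small[of 0] V_small[of "pi/2"] V_small[of "-(pi/2)"] by auto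

lemma theta_val: assumes N: "N = 2*m+1"
  shows "(\<Sum>k<N. \<Sum>l<N. V (Theta_perp N k - Theta_perp N l)) = real ((m+1)^2 + m^2)"
proof -
  have a: "(N + 1) div 2 = m + 1" using N by simp
  have a': "Suc N div 2 = Suc m" using N by simp
  have aN: "m + 1 \<le> N" using N by simp
  have inner: "(\<Sum>l<N. V (Theta_perp N k - Theta_perp N l)) = (if k < m+1 then real (m+1) else real m)" for k
  proof (cases "k < m+1")
    case True
    have "(\<Sum>l<N. V (Theta_perp N k - Theta_perp N l)) = (\<Sum>l<m+1. V (Theta_perp N k - Theta_perp N l)) + (\<Sum>l\<in>{m+1..<N}. V (Theta_perp N k - Theta_perp N l))"
      by (rule split_sum[OF aN])
    also have "\<dots> = (\<Sum>l<m+1. 1) + (\<Sum>l\<in>{m+1..<N}. 0)"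
      by (intro arg_cong2[where f="(+)"] sum.cong) (use True in \<open>auto simp: Theta_perp_def a a' V_vals\<close>)
    finally show ?thesis using True by simp
  next
    case False
    have "(\<Sum>l<N. V (Theta_perp N k - Theta_perp N l)) = (\<Sum>l<m+1. V (Theta_perp N k - Theta_perp N l)) + (\<Sum>l\<in>{m+1..<N}. V (Theta_perp N k - Theta_perp N l))"
      by (rule split_sum[OF aN])
    also have "\<dots> = (\<Sum>l<m+1. 0) + (\<Sum>l\<in>{m+1..<N}. 1)"
      by (intro arg_cong2[where f="(+)"] sum.cong) (use False in \<open>auto simp: Theta_perp_def a a' V_vals\<close>)
    finally show ?thesis using False N by simp
  qed
  have "(\<Sum>k<N. \<Sum>l<N. V (Theta_perp N k - Theta_perp N l)) = (\<Sum>k<N. (if k < m+1 then real (m+1) else real m))"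
    by (simp add: inner)
  also have "\<dots> = (\<Sum>k<m+1. (if k < m+1 then real (m+1) else real m)) + (\<Sum>k\<in>{m+1..<N}. (if k < m+1 then real (m+1) else real m))"
    by (rule split_sum[OF aN])
  also have "\<dots> = (\<Sum>k<m+1. real (m+1)) + (\<Sum>k\<in>{m+1..<N}. real m)"
    by (intro arg_cong2[where f="(+)"] sum.cong) auto
  also have "\<dots> = real ((m+1)^2 + m^2)" using N by (simp add: power2_eq_square algebra_simps)
  finally show ?thesis .
qed

theorem proposition2p1:
  fixes N :: nat
  assumes "odd N"
  shows "(\<forall>\<theta> :: nat \<Rightarrow> real. F_V N (Theta_perp N) \<le> F_V N \<theta>)
         \<and> F_V N (Theta_perp N) = (real N - 1)^2 / 2"
proof -
  obtain m where N: "N = 2*m+1" using assms oddE by blast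
  have val: "F_V N (Theta_perp N) = (real N - 1)^2 / 2"
    unfolding F_alt theta_val[OF N] using N by (simp add: power2_eq_square algebra_simps)
  have "F_V N (Theta_perp N) \<le> F_V N \<theta>" for \<theta>
  proof -
    have "F_V N \<theta> \<ge> real N * real N - 2 * real (m*(m+1)) - real N"
      unfolding F_alt using general_bound[OF N, of \<theta>] by simp
    moreover have "real N * real N - 2 * real (m*(m+1)) - real N = (real N - 1)^2 / 2"
      using N by (simp add: power2_eq_square algebra_simps)
    ultimately show ?thesis using val by simp
  qed
  thus ?thesis using val by blast
qed

end
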